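(* Let $S$ be a simple $(l,r)$-framed algebra, and let $C_S=\{\alpha\in\mathbb{Z}_2^{l+r}:S_{(0,\alpha)}\ne0\}$, $D_S=\{d\in\mathbb{Z}_2^{l+r}:\bigoplus_c S_{(d,c)}\neq 0\}$. Then (1) $C_S$ and $D_S$ are subgroups of $\mathbb{Z}_2^{l+r}$; (2) $|\alpha|\in2\mathbb{Z}$ and $|d|\in 8\mathbb{Z}$ for all $\alpha\in C_S$, $d\in D_S$; (3) $|\alpha d|\in2\mathbb{Z}$ for all $\alpha\in C_S$, $d\in D_S$.
   Context: Let $\mathrm{IS}=\{0,\frac12,\frac1{16}\}$ with fusion rule $\star$ (values are subsets): $0\star h=h\star0=\{h\}$, $\frac12\star\frac12=\{0\}$, $\frac12\star\frac1{16}=\frac1{16}\star\frac12=\{\frac1{16}\}$, $\frac1{16}\star\frac1{16}=\{0,\frac12\}$; $A(h_0,h_1,h_2,h_3)=\{h: h\in h_2\star h_3,\ h_0\in h_1\star h\}$. For $h\in A(h_0,h_1,h_2,h_3)$, $h'\in A(h_0,h_2,h_1,h_3)$ define $B^{h,h'}_{h_0,h_1,h_2,h_3}$: $B_{*,0,*,*}=B_{*,*,0,*}=1$; $B_{*,\frac12,\frac12,*}=-1$; $B_{a,\frac12,\frac1{16},a'}=B_{a,\frac1{16},\frac12,a'}=i$ if $a$ or $a'$ is $\frac12$, else $-i$; $B^{b,b'}_{a,\frac1{16},\frac1{16},a'}=e^{-\pi i/8}\cdot\{1$ if $a,a'\ne\frac1{16},a=a'$; $i$ if $a,a'\neq\frac1{16},a\ne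 a'$; $\frac{1+i}2$ if $a=a'=\frac1{16},b=b'$; $\frac{1-i}2$ if $a=a'=\frac1{16},b\neq b'\}$. $\mathrm{IS}^{(l,r)}=\mathrm{IS}^l\times\mathrm{IS}^r$, $\lambda=(h_1,..,h_l,\bar h_1,..,\bar h_r)$, $s(\lambda)=\sum h_i-\sum\bar h_j$; $\star$, $A$ componentwise; $B^{\lambda,\lambda'}_{\lambda^0,\dots,\lambda^3}=\prod_{i\le l}B^{h_i,h'_i}_{h^0_i,\dots,h^3_i}\prod_{j\le r}\overline{B^{\bar h_j,\bar h'_j}_{\bar h^0_j,\dots,\bar h^3_j}}$. An $(l,r)$-framed algebra: finite-dimensional $\mathrm{IS}^{(l,r)}$-graded $S=\bigoplus S_\lambda$ over $\mathbb{C}$ with bilinear product, nonzero $1\in S_0$, $a\cdot_\lambda b$ the $S_\lambda$-component of $a\cdot b$, satisfying (FA1) $S_\lambda=0$ unless $s(\lambda)\in\mathbb{Z}$; (FA2) $S_0=\mathbb{C}1$, $1$ a two-sided unit; (FA3) $S_{\lambda^1}\cdot S_{\lambda^2}\subset\bigoplus_{\lambda\in\lambda^1\star\lambda^2}S_\lambda$; (FA4) $a_2\cdot_{\lambda^0}(a_1\cdot_{\lambda'}a_3)=\sum_{\lambda\in A(\lambda^0,\lambda^1,\lambda^2,\lambda^3)}B^{\lambda,\lambda'}_{\lambda^0,\lambda^1,\lambda^2,\lambda^3}a_1\cdot_{\lambda^0}(a_2\cdot_\lambda a_3)$ for $a_i\in S_{\lambda^i}$, $\lambda'\in A(\lambda^0,\lambda^2,\lambda^1,\lambda^3)$.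 Ideal: graded subspace $M$ with $S\cdot M\subset M$; simple: only ideals $0$ and $S$. Identify $\mathrm{IS}$ with $\{(d,c)\in\mathbb{Z}_2^2:dc=0\}$ via $0\leftrightarrow(0,0)$, $\frac12\leftrightarrow(0,1)$, $\frac1{16}\leftrightarrow(1,0)$, and componentwise $\mathrm{IS}^{(l,r)}$ with pairs $(d,c)\in(\mathbb{Z}_2^{l+r})^2$ with $dc=0$ (componentwise product); $S_{(d,c)}$ is the corresponding graded piece. For $c\in\mathbb{Z}_2^{l+r}$, $|c|_l$, $|c|_r$ count ones in the first $l$, last $r$ coordinates, and $|c|=|c|_l-|c|_r$. *)

theory Defs
  imports "HOL-Analysis.Analysis" "HOL-Algebra.Group"
begin

datatype IS = I0 | Ihalf | I16

fun weight :: "IS \<Rightarrow> rat" where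
  "weight I0 = 0" | "weight Ihalf = 1/2" | "weight I16 = 1/16"

fun fusion :: "IS \<Rightarrow> IS \<Rightarrow> IS set" where
  "fusion I0 h = {h}"
| "fusion h I0 = {h}"
| "fusion Ihalf Ihalf = {I0}"
| "fusion Ihalf I16 = {I16}"
| "fusion I16 Ihalf = {I16}"
| "fusion I16 I16 = {I0, Ihalf}"

definition Aone :: "IS \<Rightarrow> IS \<Rightarrow> IS \<Rightarrow> IS \<Rightarrow> IS set" where
  "Aone h0 h1 h2 h3 = {h. h \<in> fusion h2 h3 \<and> h0 \<in> fusion h1 h}"

text \<open>Bone h h' h0 h1 h2 h3 is B^{h,h'}_{h0,h1,h2,h3}. The value 0 in the last case
  is never used: when h1 = h2 = 1/16 and A is nonempty, h0 = 1/16 iff h3 = 1/16.\<close>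
definition Bone :: "IS \<Rightarrow> IS \<Rightarrow> IS \<Rightarrow> IS \<Rightarrow> IS \<Rightarrow> IS \<Rightarrow> complex" where
  "Bone h h' h0 h1 h2 h3 =
    (if h1 = I0 \<or> h2 = I0 then 1
     else if h1 = Ihalf \<and> h2 = Ihalf then -1
     else if (h1 = Ihalf \<and> h2 = I16) \<or> (h1 = I16 \<and> h2 = Ihalf) then
       (if h0 = Ihalf \<or> h3 = Ihalf then \<i> else - \<i>)
     else exp (- (complex_of_real pi * \<i>) / 8) *
       (if h0 \<noteq> I16 \<and> h3 \<noteq> I16 then (if h0 = h3 then 1 else \<i>)
        else if h0 = I16 \<and> h3 = I16 then
          (if h = h' then (1 + \<i>) / 2 else (1 - \<i>) / 2)
        else 0))"

section \<open>Gradings IS^(l,r): functions nat => IS, equal to 0 outside {0..<l+r}\<close>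

definition Lam :: "nat \<Rightarrow> nat \<Rightarrow> (nat \<Rightarrow> IS) set" where
  "Lam l r = {x. \<forall>i\<ge>l+r. x i = I0}"

definition sgrade :: "nat \<Rightarrow> nat \<Rightarrow> (nat \<Rightarrow> IS) \<Rightarrow> rat" where
  "sgrade l r x = (\<Sum>i<l. weight (x i)) - (\<Sum>i\<in>{l..<l+r}. weight (x i))"

definition fusionL :: "nat \<Rightarrow> nat \<Rightarrow> (nat \<Rightarrow> IS) \<Rightarrow> (nat \<Rightarrow> IS) \<Rightarrow> (nat \<Rightarrow> IS) set" where
  "fusionL l r x1 x2 = {x \<in> Lam l r. \<forall>i<l+r. x i \<in> fusion (x1 i) (x2 i)}"

definition AL :: "nat \<Rightarrow> nat \<Rightarrow> (nat \<Rightarrow> IS) \<Rightarrow> (nat \<Rightarrow> IS) \<Rightarrow> (nat \<Rightarrow> IS) \<Rightarrow> (nat \<Rightarrow> IS)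
    \<Rightarrow> (nat \<Rightarrow> IS) set" where
  "AL l r x0 x1 x2 x3 = {x \<in> Lam l r. \<forall>i<l+r. x i \<in> Aone (x0 i) (x1 i) (x2 i) (x3 i)}"

definition BL :: "nat \<Rightarrow> nat \<Rightarrow> (nat \<Rightarrow> IS) \<Rightarrow> (nat \<Rightarrow> IS) \<Rightarrow> (nat \<Rightarrow> IS) \<Rightarrow> (nat \<Rightarrow> IS)
    \<Rightarrow> (nat \<Rightarrow> IS) \<Rightarrow> (nat \<Rightarrow> IS) \<Rightarrow> complex" where
  "BL l r x x' x0 x1 x2 x3 =
     (\<Prod>i<l. Bone (x i) (x' i) (x0 i) (x1 i) (x2 i) (x3 i)) *
     (\<Prod>i\<in>{l..<l+r}. cnj (Bone (x i) (x' i) (x0 i) (x1 i) (x2 i) (x3 i)))"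

section \<open>Framed algebras, realised on a finite-dimensional complex space complex^'n\<close>

definition csubspace :: "(complex ^ 'n) set \<Rightarrow> bool" where
  "csubspace U \<longleftrightarrow> 0 \<in> U \<and> (\<forall>x\<in>U. \<forall>y\<in>U. x + y \<in> U) \<and> (\<forall>c. \<forall>x\<in>U. c *s x \<in> U)"

definition decomp_at :: "nat \<Rightarrow> nat \<Rightarrow> ((nat \<Rightarrow> IS) \<Rightarrow> (complex ^ 'n) set) \<Rightarrow> complex ^ 'n
    \<Rightarrow> ((nat \<Rightarrow> IS) \<Rightarrow> complex ^ 'n) \<Rightarrow> bool" where
  "decomp_at l r Sg v f \<longleftrightarrow> (\<forall>x\<in>Lam l r. f x \<in> Sg x) \<and> (\<forall>x. x \<notin> Lam l r \<longrightarrow> f x = 0)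
      \<and> v = (\<Sum>x\<in>Lam l r. f x)"

definition graded :: "nat \<Rightarrow> nat \<Rightarrow> ((nat \<Rightarrow> IS) \<Rightarrow> (complex ^ 'n) set) \<Rightarrow> bool" where
  "graded l r Sg \<longleftrightarrow> (\<forall>x. csubspace (Sg x)) \<and> (\<forall>v. \<exists>!f. decomp_at l r Sg v f)"

definition comp :: "nat \<Rightarrow> nat \<Rightarrow> ((nat \<Rightarrow> IS) \<Rightarrow> (complex ^ 'n) set) \<Rightarrow> (nat \<Rightarrow> IS)
    \<Rightarrow> complex ^ 'n \<Rightarrow> complex ^ 'n" where
  "comp l r Sg x v = (THE f. decomp_at l r Sg v f) x"

definition cbilinear :: "(complex ^ 'n \<Rightarrow> complex ^ 'n \<Rightarrow> complex ^ 'n) \<Rightarrow> bool" where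
  "cbilinear m \<longleftrightarrow> (\<forall>a b c. m (a + b) c = m a c + m b c \<and> m a (b + c) = m a b + m a c)
     \<and> (\<forall>k a b. m (k *s a) b = k *s m a b \<and> m a (k *s b) = k *s m a b)"

abbreviation zeroL :: "nat \<Rightarrow> IS" where "zeroL \<equiv> (\<lambda>_. I0)"

definition framed_algebra :: "nat \<Rightarrow> nat \<Rightarrow> ((nat \<Rightarrow> IS) \<Rightarrow> (complex ^ 'n) set)
    \<Rightarrow> (complex ^ 'n \<Rightarrow> complex ^ 'n \<Rightarrow> complex ^ 'n) \<Rightarrow> complex ^ 'n \<Rightarrow> bool" where
  "framed_algebra l r Sg m u \<longleftrightarrow>
     graded l r Sg \<and> cbilinear m \<and> u \<noteq> 0 \<and>
     \<comment> \<open>FA1\<close>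
     (\<forall>x\<in>Lam l r. sgrade l r x \<notin> \<int> \<longrightarrow> Sg x = {0}) \<and>
     \<comment> \<open>FA2\<close>
     Sg zeroL = {c *s u | c. True} \<and> (\<forall>a. m u a = a \<and> m a u = a) \<and>
     \<comment> \<open>FA3\<close>
     (\<forall>x1\<in>Lam l r. \<forall>x2\<in>Lam l r. \<forall>a\<in>Sg x1. \<forall>b\<in>Sg x2. \<forall>x\<in>Lam l r.
        x \<notin> fusionL l r x1 x2 \<longrightarrow> comp l r Sg x (m a b) = 0) \<and>
     \<comment> \<open>FA4\<close>
     (\<forall>x0\<in>Lam l r. \<forall>x1\<in>Lam l r. \<forall>x2\<in>Lam l r. \<forall>x3\<in>Lam l r.
      \<forall>a1\<in>Sg x1. \<forall>a2\<in>Sg x2. \<forall>a3\<in>Sg x3. \<forall>x'\<in>AL l r x0 x2 x1 x3.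
        comp l r Sg x0 (m a2 (comp l r Sg x' (m a1 a3))) =
        (\<Sum>x\<in>AL l r x0 x1 x2 x3.
           BL l r x x' x0 x1 x2 x3 *s comp l r Sg x0 (m a1 (comp l r Sg x (m a2 a3)))))"

definition framed_ideal :: "nat \<Rightarrow> nat \<Rightarrow> ((nat \<Rightarrow> IS) \<Rightarrow> (complex ^ 'n) set)
    \<Rightarrow> (complex ^ 'n \<Rightarrow> complex ^ 'n \<Rightarrow> complex ^ 'n) \<Rightarrow> (complex ^ 'n) set \<Rightarrow> bool" where
  "framed_ideal l r Sg m M \<longleftrightarrow> csubspace M \<and> (\<forall>v\<in>M. \<forall>x\<in>Lam l r. comp l r Sg x v \<in> M)
     \<and> (\<forall>a. \<forall>v\<in>M. m a v \<in> M)"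

definition simple_framed_algebra :: "nat \<Rightarrow> nat \<Rightarrow> ((nat \<Rightarrow> IS) \<Rightarrow> (complex ^ 'n) set)
    \<Rightarrow> (complex ^ 'n \<Rightarrow> complex ^ 'n \<Rightarrow> complex ^ 'n) \<Rightarrow> complex ^ 'n \<Rightarrow> bool" where
  "simple_framed_algebra l r Sg m u \<longleftrightarrow> framed_algebra l r Sg m u \<and>
     (\<forall>M. framed_ideal l r Sg m M \<longrightarrow> M = {0} \<or> M = UNIV)"

section \<open>Z_2^(l+r) as subsets of {..<l+r}; (d,c) coordinates\<close>

definition Z2pow :: "nat \<Rightarrow> nat set monoid" where
  "Z2pow n = \<lparr>carrier = Pow {..<n}, monoid.mult = (\<lambda>A B. (A - B) \<union> (B - A)), one = {}\<rparr>"

text \<open>(d,c) with dc = 0 corresponds to the grading: 1/16 on d, 1/2 on c, 0 elsewhere.\<close>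
definition grade_dc :: "nat set \<Rightarrow> nat set \<Rightarrow> nat \<Rightarrow> IS" where
  "grade_dc d c i = (if i \<in> d then I16 else if i \<in> c then Ihalf else I0)"

definition C_S :: "nat \<Rightarrow> nat \<Rightarrow> ((nat \<Rightarrow> IS) \<Rightarrow> (complex ^ 'n) set) \<Rightarrow> nat set set" where
  "C_S l r Sg = {\<alpha>. \<alpha> \<subseteq> {..<l+r} \<and> Sg (grade_dc {} \<alpha>) \<noteq> {0}}"

definition D_S :: "nat \<Rightarrow> nat \<Rightarrow> ((nat \<Rightarrow> IS) \<Rightarrow> (complex ^ 'n) set) \<Rightarrow> nat set set" where
  "D_S l r Sg = {d. d \<subseteq> {..<l+r} \<and>
     (\<exists>c. c \<subseteq> {..<l+r} \<and> d \<inter> c = {} \<and> Sg (grade_dc d c) \<noteq> {0})}"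

text \<open>|c| = |c|_l - |c|_r\<close>
definition wt :: "nat \<Rightarrow> nat \<Rightarrow> nat set \<Rightarrow> int" where
  "wt l r c = int (card (c \<inter> {..<l})) - int (card (c \<inter> {l..<l+r}))"

end

theory Submission
  imports Defs
begin

lemma finite_IS: "finite (UNIV :: IS set)"
proof -
  have eq: "(UNIV :: IS set) = {I0, Ihalf, I16}" by (auto intro: IS.exhaust)
  show ?thesis unfolding eq by simp
qed

lemma finite_Lam: "finite (Lam l r)"
proof -
  let ?g = "\<lambda>xs i. if i < l + r then xs ! i else I0"
  have "Lam l r \<subseteq> ?g ` {xs. set xs \<subseteq> UNIV \<and> length xs = l + r}"
  proof
    fix x assume x: "x \<in> Lam l r"
    have "x = ?g (map x [0..<l+r])"
      using x by (auto simp: Lam_def fun_eq_iff)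
    then show "x \<in> ?g ` {xs. set xs \<subseteq> UNIV \<and> length xs = l + r}" by force
  qed
  moreover have "finite {xs. set xs \<subseteq> (UNIV::IS set) \<and> length xs = l + r}"
    by (rule finite_lists_length_eq[OF finite_IS])
  ultimately show ?thesis by (meson finite_imageI finite_subset)
qed

lemma smult_sum: "(c::complex) *s sum f A = sum (\<lambda>i. c *s f i) A"
  by (induction A rule: infinite_finite_induct) (auto simp: vector_add_ldistrib)

lemma zeroL_Lam: "zeroL \<in> Lam l r" by (simp add: Lam_def)

lemma fusion_0R [simp]: "fusion h I0 = {h}" by (cases h) auto

lemma fusion_sym: "fusion a b = fusion b a" by (cases a; cases b) auto

lemma AL_iff: "x \<in> AL l r x0 x1 x2 x3 \<longleftrightarrow> x \<in> Lam l r \<and>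
   (\<forall>i<l+r. x i \<in> fusion (x2 i) (x3 i) \<and> x0 i \<in> fusion (x1 i) (x i))"
  by (simp add: AL_def Aone_def)

lemma fusionL_iff: "x \<in> fusionL l r x1 x2 \<longleftrightarrow> x \<in> Lam l r \<and> (\<forall>i<l+r. x i \<in> fusion (x1 i) (x2 i))"
  by (simp add: fusionL_def)

lemma grade_Lam: "d \<subseteq> {..<l+r} \<Longrightarrow> c \<subseteq> {..<l+r} \<Longrightarrow> grade_dc d c \<in> Lam l r"
  by (auto simp: Lam_def grade_dc_def)

lemma grade_00: "grade_dc {} {} = zeroL" by (simp add: grade_dc_def fun_eq_iff)

lemma weight_dc: "d \<inter> c = {} \<Longrightarrow> weight (grade_dc d c i) = of_bool (i \<in> d) / 16 + of_bool (i \<in> c) / 2"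
  by (auto simp: grade_dc_def)

lemma sgrade_dc:
  assumes "d \<inter> c = {}"
  shows "sgrade l r (grade_dc d c) = of_int (wt l r d) / 16 + of_int (wt l r c) / 2"
proof -
  have 1: "(\<Sum>i<l. weight (grade_dc d c i)) = of_nat (card ({..<l} \<inter> d))/16 + of_nat (card ({..<l} \<inter> c))/2"
    using assms by (simp add: weight_dc sum.distrib sum_divide_distrib[symmetric])
  have 2: "(\<Sum>i\<in>{l..<l+r}. weight (grade_dc d c i)) = of_nat (card ({l..<l+r} \<inter> d))/16 + of_nat (card ({l..<l+r} \<inter> c))/2"
    using assms by (simp add: weight_dc sum.distrib sum_divide_distrib[symmetric])
  show ?thesis unfolding sgrade_def 1 2 wt_def
    by (simp add: Int_commute of_int_diff diff_divide_distrib)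
qed

lemma prod_sign:
  assumes "finite A"
  shows "(\<Prod>i\<in>A. if P i then -1 else (1::complex)) = (-1) ^ card {i\<in>A. P i}"
  using assms
proof (induction A rule: finite_induct)
  case empty then show ?case by simp
next
  case (insert x F)
  have "{i \<in> insert x F. P i} = (if P x then insert x {i\<in>F. P i} else {i\<in>F. P i})" by auto
  then show ?case using insert by auto
qed

lemma coord:
  assumes "h0 \<in> fusion h1 h2" "h1 \<noteq> I16"
  shows "Bone h1 h2 h0 h2 h1 I0 * Bone h2 h1 h0 h1 h2 I0 = (if h1 = Ihalf \<and> h2 = I16 then -1 else 1)"
  using assms by (cases h1; cases h2; cases h0) (auto simp: Bone_def)

lemma BL_comm_prod:
  assumes f: "\<forall>i<l+r. nu i \<in> fusion (la i) (mu i)" and n16: "\<forall>i<l+r. la i \<noteq> I16"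
  shows "BL l r la mu nu mu la zeroL * BL l r mu la nu la mu zeroL =
    (\<Prod>i<l. if la i = Ihalf \<and> mu i = I16 then -1 else 1) *
    (\<Prod>i\<in>{l..<l+r}. if la i = Ihalf \<and> mu i = I16 then -1 else 1)"
proof -
  have e: "Bone (la i) (mu i) (nu i) (mu i) (la i) I0 * Bone (mu i) (la i) (nu i) (la i) (mu i) I0
      = (if la i = Ihalf \<and> mu i = I16 then -1 else 1)" if "i < l + r" for i
    using coord[of "nu i" "la i" "mu i"] f n16 that by blast
  have 1: "(\<Prod>i<l. Bone (la i) (mu i) (nu i) (mu i) (la i) I0 * Bone (mu i) (la i) (nu i) (la i) (mu i) I0)
     = (\<Prod>i<l. if la i = Ihalf \<and> mu i = I16 then -1 else 1)"
    by (rule prod.cong) (auto simp: e)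
  have 2: "(\<Prod>i\<in>{l..<l+r}. cnj (Bone (la i) (mu i) (nu i) (mu i) (la i) I0) * cnj (Bone (mu i) (la i) (nu i) (la i) (mu i) I0))
     = (\<Prod>i\<in>{l..<l+r}. if la i = Ihalf \<and> mu i = I16 then -1 else 1)"
  proof (rule prod.cong)
    fix i assume "i \<in> {l..<l+r}"
    then have "i < l + r" by simp
    then have "cnj (Bone (la i) (mu i) (nu i) (mu i) (la i) I0) * cnj (Bone (mu i) (la i) (nu i) (la i) (mu i) I0)
      = cnj (if la i = Ihalf \<and> mu i = I16 then -1 else 1)"
      by (simp only: complex_cnj_mult[symmetric] e)
    then show "cnj (Bone (la i) (mu i) (nu i) (mu i) (la i) I0) * cnj (Bone (mu i) (la i) (nu i) (la i) (mu i) I0)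
      = (if la i = Ihalf \<and> mu i = I16 then -1 else 1)" by simp
  qed simp
  have "BL l r la mu nu mu la zeroL * BL l r mu la nu la mu zeroL =
    (\<Prod>i<l. Bone (la i) (mu i) (nu i) (mu i) (la i) I0 * Bone (mu i) (la i) (nu i) (la i) (mu i) I0) *
    (\<Prod>i\<in>{l..<l+r}. cnj (Bone (la i) (mu i) (nu i) (mu i) (la i) I0) * cnj (Bone (mu i) (la i) (nu i) (la i) (mu i) I0))"
    unfolding BL_def prod.distrib by (simp add: mult_ac)
  then show ?thesis using 1 2 by simp
qed

lemma fus16:
  assumes "h \<in> fusion (if i \<in> d1 then I16 else if i \<in> c1 then Ihalf else I0)
                      (if i \<in> d2 then I16 else if i \<in> c2 then Ihalf else I0)"
  shows "h = I16 \<longleftrightarrow> (i \<in> d1) \<noteq> (i \<in> d2)"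
  using assms by (cases "i \<in> d1"; cases "i \<in> d2"; cases "i \<in> c1"; cases "i \<in> c2"; cases h) auto

lemma Z2_inv: "A \<subseteq> {..<n} \<Longrightarrow> inv\<^bsub>Z2pow n\<^esub> A = A"
  unfolding m_inv_def Z2pow_def by (rule the_equality) auto

lemma Z2_subgroup:
  assumes "H \<subseteq> Pow {..<n}" "{} \<in> H" "\<And>A B. A \<in> H \<Longrightarrow> B \<in> H \<Longrightarrow> (A - B) \<union> (B - A) \<in> H"
  shows "subgroup H (Z2pow n)"
proof (rule subgroup.intro)
  show "H \<subseteq> carrier (Z2pow n)" using assms by (simp add: Z2pow_def)
  show "\<And>x y. x \<in> H \<Longrightarrow> y \<in> H \<Longrightarrow> x \<otimes>\<^bsub>Z2pow n\<^esub> y \<in> H" using assms by (simp add: Z2pow_def)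
  show "\<one>\<^bsub>Z2pow n\<^esub> \<in> H" using assms by (simp add: Z2pow_def)
  show "\<And>x. x \<in> H \<Longrightarrow> inv\<^bsub>Z2pow n\<^esub> x \<in> H"
  proof -
    fix x assume "x \<in> H"
    moreover then have "x \<subseteq> {..<n}" using assms by blast
    ultimately show "inv\<^bsub>Z2pow n\<^esub> x \<in> H" by (simp add: Z2_inv)
  qed
qed

locale FAL =
  fixes l r :: nat and Sg :: "(nat \<Rightarrow> IS) \<Rightarrow> (complex ^ 'n) set"
    and m :: "complex ^ 'n \<Rightarrow> complex ^ 'n \<Rightarrow> complex ^ 'n" and u :: "complex ^ 'n"
  assumes fa: "framed_algebra l r Sg m u"
begin

abbreviation "cp \<equiv> comp l r Sg"
abbreviation "LL \<equiv> Lam l r"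

lemmas fa' = fa[unfolded framed_algebra_def]
lemmas fa_c = fa'[THEN conjunct1] fa'[THEN conjunct2, THEN conjunct1] fa'[THEN conjunct2, THEN conjunct2, THEN conjunct1] fa'[THEN conjunct2, THEN conjunct2, THEN conjunct2, THEN conjunct1] fa'[THEN conjunct2, THEN conjunct2, THEN conjunct2, THEN conjunct2, THEN conjunct1] fa'[THEN conjunct2, THEN conjunct2, THEN conjunct2, THEN conjunct2, THEN conjunct2, THEN conjunct1] fa'[THEN conjunct2, THEN conjunct2, THEN conjunct2, THEN conjunct2, THEN conjunct2, THEN conjunct2, THEN conjunct1] fa'[THEN conjunct2, THEN conjunct2, THEN conjunct2, THEN conjunct2, THEN conjunct2, THEN conjunct2, THEN conjunct2]

lemma grd: "graded l r Sg" by (rule fa_c(1))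
lemma sub: "csubspace (Sg x)" using grd[unfolded graded_def, THEN conjunct1] by (rule spec)
lemma sub0: "0 \<in> Sg x" using sub[of x, unfolded csubspace_def] by (rule conjunct1)
lemma subadd: "a \<in> Sg x \<Longrightarrow> b \<in> Sg x \<Longrightarrow> a + b \<in> Sg x"
  by (rule sub[of x, unfolded csubspace_def, THEN conjunct2, THEN conjunct1, THEN bspec, THEN bspec])
lemma subsm: "a \<in> Sg x \<Longrightarrow> c *s a \<in> Sg x"
  by (rule sub[of x, unfolded csubspace_def, THEN conjunct2, THEN conjunct2, THEN spec, THEN bspec])
lemma exu: "\<exists>!f. decomp_at l r Sg v f" using grd[unfolded graded_def, THEN conjunct2] by (rule spec)

lemma cp_decomp: "decomp_at l r Sg v (\<lambda>x. cp x v)"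
  unfolding comp_def using theI'[OF exu[of v]] by simp

lemma cp_unique: "decomp_at l r Sg v f \<Longrightarrow> cp x v = f x"
  unfolding comp_def using the1_equality[OF exu] by metis

lemma cp_in: "x \<in> LL \<Longrightarrow> cp x v \<in> Sg x"
  by (rule cp_decomp[of v, unfolded decomp_at_def, THEN conjunct1, THEN bspec])
lemma cp_out: "x \<notin> LL \<Longrightarrow> cp x v = 0"
  by (rule cp_decomp[of v, unfolded decomp_at_def, THEN conjunct2, THEN conjunct1, THEN spec, THEN mp])
lemma cp_sum: "v = (\<Sum>x\<in>LL. cp x v)"
  by (rule cp_decomp[of v, unfolded decomp_at_def, THEN conjunct2, THEN conjunct2])

lemma cp_hom: assumes "y \<in> LL" "p \<in> Sg y" shows "cp x p = (if x = y then p else 0)"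
proof -
  have "decomp_at l r Sg p (\<lambda>x. if x = y then p else 0)"
    unfolding decomp_at_def using finite_Lam[of l r] assms by (auto simp: sub0)
  then show ?thesis using cp_unique by simp
qed

lemma cp_add: "cp x (v + w) = cp x v + cp x w"
proof -
  have "decomp_at l r Sg (v + w) (\<lambda>x. cp x v + cp x w)"
    unfolding decomp_at_def using cp_in cp_out subadd cp_sum[of v, symmetric] cp_sum[of w, symmetric]
    by (auto simp: sum.distrib)
  then show ?thesis using cp_unique by simp
qed

lemma cp_smult: "cp x (c *s v) = c *s cp x v"
proof -
  have "decomp_at l r Sg (c *s v) (\<lambda>x. c *s cp x v)"
    unfolding decomp_at_def using cp_in cp_out subsm cp_sum[of v, symmetric]
    by (auto simp: smult_sum[symmetric])
  then show ?thesis using cp_unique by simp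
qed

lemma cp_zero: "cp x 0 = 0"
proof -
  have "cp x 0 = cp x 0 + cp x 0" using cp_add[of x 0 0] by (simp only: add_0_left)
  then show ?thesis by (simp only: add_cancel_right_right)
qed

lemma cp_setsum: "cp x (sum f A) = (\<Sum>i\<in>A. cp x (f i))"
  by (induction A rule: infinite_finite_induct) (auto simp: cp_add cp_zero)

lemma bil: "cbilinear m" by (rule fa_c(2))
lemma m_addL: "m (a + b) c = m a c + m b c"
  by (rule bil[unfolded cbilinear_def, THEN conjunct1, THEN spec, THEN spec, THEN spec, THEN conjunct1])
lemma m_addR: "m a (b + c) = m a b + m a c"
  by (rule bil[unfolded cbilinear_def, THEN conjunct1, THEN spec, THEN spec, THEN spec, THEN conjunct2])
lemma m_smL: "m (k *s a) b = k *s m a b"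
  by (rule bil[unfolded cbilinear_def, THEN conjunct2, THEN spec, THEN spec, THEN spec, THEN conjunct1])
lemma m_smR: "m a (k *s b) = k *s m a b"
  by (rule bil[unfolded cbilinear_def, THEN conjunct2, THEN spec, THEN spec, THEN spec, THEN conjunct2])
lemma m_zeroL: "m 0 b = 0"
proof -
  have "m 0 b = m 0 b + m 0 b" using m_addL[of 0 0 b] by (simp only: add_0_left)
  then show ?thesis by (simp only: add_cancel_right_right)
qed
lemma m_zeroR: "m a 0 = 0"
proof -
  have "m a 0 = m a 0 + m a 0" using m_addR[of a 0 0] by (simp only: add_0_left)
  then show ?thesis by (simp only: add_cancel_right_right)
qed
lemma m_sumL: "m (sum f A) b = (\<Sum>i\<in>A. m (f i) b)"
  by (induction A rule: infinite_finite_induct) (auto simp: m_addL m_zeroL)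
lemma m_sumR: "m a (sum f A) = (\<Sum>i\<in>A. m a (f i))"
  by (induction A rule: infinite_finite_induct) (auto simp: m_addR m_zeroR)

lemma u_nz: "u \<noteq> 0" by (rule fa_c(3))
lemma Sg0: "Sg zeroL = {c *s u | c. True}" by (rule fa_c(5))
lemma unitL: "m u a = a" using fa_c(6) by blast
lemma unitR: "m a u = a" using fa_c(6) by blast
lemma u_in: "u \<in> Sg zeroL"
proof -
  have "1 *s u \<in> {c *s u | c. True}" by blast
  then show ?thesis using Sg0 by simp
qed

lemma FA1: "x \<in> LL \<Longrightarrow> sgrade l r x \<notin> \<int> \<Longrightarrow> Sg x = {0}" using fa_c(4) by blast

lemma FA3: "x1 \<in> LL \<Longrightarrow> x2 \<in> LL \<Longrightarrow> a \<in> Sg x1 \<Longrightarrow> b \<in> Sg x2 \<Longrightarrow> x \<in> LL \<Longrightarrow>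
   x \<notin> fusionL l r x1 x2 \<Longrightarrow> cp x (m a b) = 0"
  using fa_c(7) by blast

lemma FA4: "x0 \<in> LL \<Longrightarrow> x1 \<in> LL \<Longrightarrow> x2 \<in> LL \<Longrightarrow> x3 \<in> LL \<Longrightarrow>
   a1 \<in> Sg x1 \<Longrightarrow> a2 \<in> Sg x2 \<Longrightarrow> a3 \<in> Sg x3 \<Longrightarrow> x' \<in> AL l r x0 x2 x1 x3 \<Longrightarrow>
   cp x0 (m a2 (cp x' (m a1 a3))) =
   (\<Sum>x\<in>AL l r x0 x1 x2 x3. BL l r x x' x0 x1 x2 x3 *s cp x0 (m a1 (cp x (m a2 a3))))"
  using fa_c(8) by blast

lemma key:
  assumes "lam \<in> LL" "a \<in> Sg lam" "\<sigma> \<in> LL" "\<tau> \<in> LL" "\<rho> \<in> LL" "\<nu> \<in> LL"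
    "x \<in> Sg \<sigma>" "y \<in> Sg \<tau>" "\<forall>\<kappa>\<in>LL. cp \<kappa> (m a y) = 0"
  shows "cp \<nu> (m a (cp \<rho> (m x y))) = 0"
proof (cases "\<rho> \<in> AL l r \<nu> lam \<sigma> \<tau>")
  case True
  have "cp \<nu> (m a (cp \<rho> (m x y))) =
    (\<Sum>\<kappa>\<in>AL l r \<nu> \<sigma> lam \<tau>. BL l r \<kappa> \<rho> \<nu> \<sigma> lam \<tau> *s cp \<nu> (m x (cp \<kappa> (m a y))))"
    by (rule FA4) (use assms True in auto)
  also have "\<dots> = 0"
    using assms by (intro sum.neutral ballI) (auto simp: AL_def m_zeroR cp_zero)
  finally show ?thesis .
next
  case notAL: False
  show ?thesis
  proof (cases "\<rho> \<in> fusionL l r \<sigma> \<tau>")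
    case False
    then have "cp \<rho> (m x y) = 0" using FA3 assms by blast
    then show ?thesis by (simp add: m_zeroR cp_zero)
  next
    case True
    with notAL have "\<nu> \<notin> fusionL l r lam \<rho>" by (auto simp: AL_iff fusionL_iff)
    then show ?thesis using FA3[of lam \<rho> a "cp \<rho> (m x y)" \<nu>] assms cp_in by blast
  qed
qed

lemma comm:
  assumes "\<alpha> \<in> LL" "\<beta> \<in> LL" "\<nu> \<in> LL" "p \<in> Sg \<alpha>" "q \<in> Sg \<beta>" "\<nu> \<in> fusionL l r \<alpha> \<beta>"
  shows "cp \<nu> (m q p) = BL l r \<beta> \<alpha> \<nu> \<alpha> \<beta> zeroL *s cp \<nu> (m p q)"
proof -
  have A1: "\<alpha> \<in> AL l r \<nu> \<beta> \<alpha> zeroL" using assms by (auto simp: AL_iff fusionL_iff fusion_sym)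
  have A2: "AL l r \<nu> \<alpha> \<beta> zeroL = {\<beta>}"
  proof
    show "AL l r \<nu> \<alpha> \<beta> zeroL \<subseteq> {\<beta>}"
    proof
      fix x assume x: "x \<in> AL l r \<nu> \<alpha> \<beta> zeroL"
      have "x i = \<beta> i" for i using x assms(2) by (cases "i < l+r") (auto simp: AL_iff Lam_def)
      then show "x \<in> {\<beta>}" by auto
    qed
    show "{\<beta>} \<subseteq> AL l r \<nu> \<alpha> \<beta> zeroL" using assms by (auto simp: AL_iff fusionL_iff)
  qed
  have "cp \<nu> (m q (cp \<alpha> (m p u))) =
     (\<Sum>x\<in>AL l r \<nu> \<alpha> \<beta> zeroL. BL l r x \<alpha> \<nu> \<alpha> \<beta> zeroL *s cp \<nu> (m p (cp x (m q u))))"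
    by (rule FA4) (use assms A1 zeroL_Lam u_in in auto)
  then show ?thesis using A2 by (simp add: unitR cp_hom[OF assms(1,4)] cp_hom[OF assms(2,5)])
qed

lemma nonzero_el: "Sg x \<noteq> {0} \<Longrightarrow> \<exists>a\<in>Sg x. a \<noteq> 0" using sub0 by blast

lemma C_even: assumes "\<alpha> \<in> C_S l r Sg" shows "even (wt l r \<alpha>)"
proof -
  have s: "\<alpha> \<subseteq> {..<l+r}" and n: "Sg (grade_dc {} \<alpha>) \<noteq> {0}" using assms by (auto simp: C_S_def)
  have g: "grade_dc {} \<alpha> \<in> LL" by (rule grade_Lam) (use s in auto)
  have i: "sgrade l r (grade_dc {} \<alpha>) \<in> \<int>" using FA1[OF g] n by blast
  have eq: "sgrade l r (grade_dc {} \<alpha>) = of_int (wt l r \<alpha>) / 2"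
    using sgrade_dc[of "{}" \<alpha> l r] by (simp add: wt_def)
  from i have "(of_int (wt l r \<alpha>) / 2 :: rat) \<in> \<int>" by (simp only: eq)
  then obtain k where k: "(of_int (wt l r \<alpha>) / 2 :: rat) = of_int k" by (rule Ints_cases)
  then have "(of_int (wt l r \<alpha>) :: rat) = 2 * of_int k" by linarith
  then have "(of_int (wt l r \<alpha>) :: rat) = of_int (2 * k)" by simp
  then have "wt l r \<alpha> = 2 * k" by (simp only: of_int_eq_iff)
  then show ?thesis by simp
qed

lemma D_8: assumes "d \<in> D_S l r Sg" shows "8 dvd (wt l r d)"
proof -
  obtain c where s: "d \<subseteq> {..<l+r}" "c \<subseteq> {..<l+r}" "d \<inter> c = {}" and n: "Sg (grade_dc d c) \<noteq> {0}"
    using assms by (auto simp: D_S_def)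
  have g: "grade_dc d c \<in> LL" by (rule grade_Lam[OF s(1,2)])
  have i: "sgrade l r (grade_dc d c) \<in> \<int>" using FA1[OF g] n by blast
  have eq: "sgrade l r (grade_dc d c) = of_int (wt l r d) / 16 + of_int (wt l r c) / 2"
    by (rule sgrade_dc[OF s(3)])
  from i have "(of_int (wt l r d) / 16 + of_int (wt l r c) / 2 :: rat) \<in> \<int>" by (simp only: eq)
  then obtain k where k: "(of_int (wt l r d) / 16 + of_int (wt l r c) / 2 :: rat) = of_int k"
    by (rule Ints_cases)
  then have "(of_int (wt l r d) :: rat) = 16 * of_int k - 8 * of_int (wt l r c)" by linarith
  then have "(of_int (wt l r d) :: rat) = of_int (16 * k - 8 * wt l r c)" by simp
  then have "wt l r d = 16 * k - 8 * wt l r c" by (simp only: of_int_eq_iff)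
  then have "wt l r d = 8 * (2 * k - wt l r c)" by simp
  then show ?thesis by (metis dvd_triv_left)
qed

end

locale SFAL = FAL +
  assumes simpl: "\<forall>M. framed_ideal l r Sg m M \<longrightarrow> M = {0} \<or> M = UNIV"
begin

lemma NZ:
  assumes "lam \<in> LL" "a \<in> Sg lam" "a \<noteq> 0" "mu \<in> LL" "b \<in> Sg mu" "b \<noteq> 0"
  shows "\<exists>\<nu>\<in>LL. cp \<nu> (m a b) \<noteq> 0"
proof -
  define M where "M = {v. \<forall>\<rho>\<in>LL. \<forall>\<nu>\<in>LL. cp \<nu> (m a (cp \<rho> v)) = 0}"
  have "csubspace M" unfolding csubspace_def M_def
    by (auto simp: cp_zero m_zeroR cp_add m_addR cp_smult m_smR)
  moreover have "\<forall>v\<in>M. \<forall>x\<in>LL. cp x v \<in> M"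
  proof (intro ballI)
    fix v x assume v: "v \<in> M" and x: "x \<in> LL"
    have "cp \<rho> (cp x v) = (if \<rho> = x then cp x v else 0)" for \<rho> using cp_hom[OF x cp_in[OF x]] .
    then show "cp x v \<in> M" using v unfolding M_def by (auto simp: m_zeroR cp_zero)
  qed
  moreover have "\<forall>b'. \<forall>v\<in>M. m b' v \<in> M"
  proof (intro allI ballI)
    fix b' v assume v: "v \<in> M"
    have vz: "\<forall>\<kappa>\<in>LL. cp \<kappa> (m a (cp \<tau> v)) = 0" if "\<tau> \<in> LL" for \<tau> using v that unfolding M_def by blast
    show "m b' v \<in> M" unfolding M_def
    proof (intro CollectI ballI)
      fix \<rho> \<nu> assume \<rho>: "\<rho> \<in> LL" and \<nu>: "\<nu> \<in> LL"
      have "m b' v = m (\<Sum>\<sigma>\<in>LL. cp \<sigma> b') (\<Sum>\<tau>\<in>LL. cp \<tau> v)"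
        using cp_sum[of b', symmetric] cp_sum[of v, symmetric] by simp
      also have "\<dots> = (\<Sum>\<tau>\<in>LL. \<Sum>\<sigma>\<in>LL. m (cp \<sigma> b') (cp \<tau> v))"
        by (simp add: m_sumL m_sumR)
      finally have "cp \<nu> (m a (cp \<rho> (m b' v))) =
          (\<Sum>\<tau>\<in>LL. \<Sum>\<sigma>\<in>LL. cp \<nu> (m a (cp \<rho> (m (cp \<sigma> b') (cp \<tau> v)))))"
        by (simp add: cp_setsum m_sumR)
      also have "\<dots> = 0"
      proof (intro sum.neutral ballI)
        fix \<tau> \<sigma> assume \<tau>: "\<tau> \<in> LL" and \<sigma>: "\<sigma> \<in> LL"
        show "cp \<nu> (m a (cp \<rho> (m (cp \<sigma> b') (cp \<tau> v)))) = 0"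
          by (rule key[OF assms(1,2) \<sigma> \<tau> \<rho> \<nu> cp_in[OF \<sigma>] cp_in[OF \<tau>] vz[OF \<tau>]])
      qed
      finally show "cp \<nu> (m a (cp \<rho> (m b' v))) = 0" .
    qed
  qed
  ultimately have "framed_ideal l r Sg m M" unfolding framed_ideal_def by blast
  then have "M = {0} \<or> M = UNIV" using simpl by blast
  moreover have "u \<notin> M"
  proof
    assume "u \<in> M"
    then have "cp lam (m a (cp zeroL u)) = 0" unfolding M_def using assms zeroL_Lam by blast
    moreover have "cp zeroL u = u" using cp_hom[OF zeroL_Lam u_in] by simp
    moreover have "cp lam a = a" using cp_hom[OF assms(1,2)] by simp
    ultimately show False using assms unitR by simp
  qed
  ultimately have "M = {0}" by blast
  then have "b \<notin> M" using assms by blast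
  then obtain \<rho> \<nu> where \<rho>: "\<rho> \<in> LL" and \<nu>: "\<nu> \<in> LL" and ne: "cp \<nu> (m a (cp \<rho> b)) \<noteq> 0"
    unfolding M_def by blast
  have "cp \<rho> b = (if \<rho> = mu then b else 0)" using cp_hom[OF assms(4,5)] .
  then show ?thesis using ne \<nu> by (auto simp: m_zeroR cp_zero split: if_splits)
qed

lemma C_closed:
  assumes "\<alpha> \<in> C_S l r Sg" "\<beta> \<in> C_S l r Sg"
  shows "(\<alpha> - \<beta>) \<union> (\<beta> - \<alpha>) \<in> C_S l r Sg"
proof -
  have sa: "\<alpha> \<subseteq> {..<l+r}" and sb: "\<beta> \<subseteq> {..<l+r}"
    and na: "Sg (grade_dc {} \<alpha>) \<noteq> {0}" and nb: "Sg (grade_dc {} \<beta>) \<noteq> {0}"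
    using assms by (auto simp: C_S_def)
  have la: "grade_dc {} \<alpha> \<in> LL" and mu: "grade_dc {} \<beta> \<in> LL" using sa sb by (auto intro: grade_Lam)
  obtain a where a: "a \<in> Sg (grade_dc {} \<alpha>)" "a \<noteq> 0" using nonzero_el[OF na] by blast
  obtain b where b: "b \<in> Sg (grade_dc {} \<beta>)" "b \<noteq> 0" using nonzero_el[OF nb] by blast
  obtain nu where nu: "nu \<in> LL" and ne: "cp nu (m a b) \<noteq> 0" using NZ[OF la a mu b] by blast
  have fus: "nu \<in> fusionL l r (grade_dc {} \<alpha>) (grade_dc {} \<beta>)" using FA3[OF la mu a(1) b(1) nu] ne by blast
  have "nu = grade_dc {} ((\<alpha> - \<beta>) \<union> (\<beta> - \<alpha>))"
  proof
    fix i show "nu i = grade_dc {} ((\<alpha> - \<beta>) \<union> (\<beta> - \<alpha>)) i"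
    proof (cases "i < l + r")
      case True then have "nu i \<in> fusion (grade_dc {} \<alpha> i) (grade_dc {} \<beta> i)" using fus by (simp add: fusionL_iff)
      then show ?thesis by (auto simp: grade_dc_def split: if_splits)
    next
      case False then show ?thesis using nu sa sb by (auto simp: Lam_def grade_dc_def)
    qed
  qed
  then have "Sg (grade_dc {} ((\<alpha> - \<beta>) \<union> (\<beta> - \<alpha>))) \<noteq> {0}" using cp_in[OF nu] ne by force
  then show ?thesis using sa sb by (auto simp: C_S_def)
qed

lemma D_closed:
  assumes "d1 \<in> D_S l r Sg" "d2 \<in> D_S l r Sg"
  shows "(d1 - d2) \<union> (d2 - d1) \<in> D_S l r Sg"
proof -
  obtain c1 where s1: "d1 \<subseteq> {..<l+r}" "c1 \<subseteq> {..<l+r}" and n1: "Sg (grade_dc d1 c1) \<noteq> {0}"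
    using assms(1) by (auto simp: D_S_def)
  obtain c2 where s2: "d2 \<subseteq> {..<l+r}" "c2 \<subseteq> {..<l+r}" and n2: "Sg (grade_dc d2 c2) \<noteq> {0}"
    using assms(2) by (auto simp: D_S_def)
  have la: "grade_dc d1 c1 \<in> LL" and mu: "grade_dc d2 c2 \<in> LL" using s1 s2 by (auto intro: grade_Lam)
  obtain a where a: "a \<in> Sg (grade_dc d1 c1)" "a \<noteq> 0" using nonzero_el[OF n1] by blast
  obtain b where b: "b \<in> Sg (grade_dc d2 c2)" "b \<noteq> 0" using nonzero_el[OF n2] by blast
  obtain nu where nu: "nu \<in> LL" and ne: "cp nu (m a b) \<noteq> 0" using NZ[OF la a mu b] by blast
  have fus: "nu \<in> fusionL l r (grade_dc d1 c1) (grade_dc d2 c2)" using FA3[OF la mu a(1) b(1) nu] ne by blast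
  define D where "D = (d1 - d2) \<union> (d2 - d1)"
  define c where "c = {i. i < l + r \<and> nu i = Ihalf}"
  have D16: "nu i = I16 \<longleftrightarrow> i \<in> D" if "i < l + r" for i
  proof -
    have "nu i \<in> fusion (grade_dc d1 c1 i) (grade_dc d2 c2 i)" using fus that by (simp add: fusionL_iff)
    then have "nu i = I16 \<longleftrightarrow> (i \<in> d1) \<noteq> (i \<in> d2)" unfolding grade_dc_def by (rule fus16)
    then show ?thesis unfolding D_def by blast
  qed
  have sD: "D \<subseteq> {..<l+r}" using s1 s2 by (auto simp: D_def)
  have sc: "c \<subseteq> {..<l+r}" by (auto simp: c_def)
  have nc: "i \<notin> c" if "i \<in> D" for i
  proof -
    have "i < l + r" using that sD by auto
    then have "nu i = I16" using D16 that by blast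
    then show ?thesis by (simp add: c_def)
  qed
  have disj: "D \<inter> c = {}" using nc by blast
  have "nu = grade_dc D c"
  proof
    fix i show "nu i = grade_dc D c i"
    proof (cases "i < l + r")
      case True
      have "i \<in> c \<longleftrightarrow> nu i = Ihalf" using True by (simp add: c_def)
      then show ?thesis using D16[OF True] by (cases "nu i") (simp_all add: grade_dc_def)
    next
      case False then show ?thesis using nu sD sc by (auto simp: Lam_def grade_dc_def)
    qed
  qed
  then have "Sg (grade_dc D c) \<noteq> {0}" using cp_in[OF nu] ne by force
  then show ?thesis using sD sc disj unfolding D_S_def D_def by blast
qed

lemma CD_even:
  assumes "\<alpha> \<in> C_S l r Sg" "d \<in> D_S l r Sg"
  shows "even (wt l r (\<alpha> \<inter> d))"
proof -
  have sa: "\<alpha> \<subseteq> {..<l+r}" and na: "Sg (grade_dc {} \<alpha>) \<noteq> {0}" using assms(1) by (auto simp: C_S_def)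
  obtain c where s: "d \<subseteq> {..<l+r}" "c \<subseteq> {..<l+r}" and n: "Sg (grade_dc d c) \<noteq> {0}"
    using assms(2) by (auto simp: D_S_def)
  have la: "grade_dc {} \<alpha> \<in> LL" and mu: "grade_dc d c \<in> LL" using sa s by (auto intro: grade_Lam)
  obtain a where a: "a \<in> Sg (grade_dc {} \<alpha>)" "a \<noteq> 0" using nonzero_el[OF na] by blast
  obtain b where b: "b \<in> Sg (grade_dc d c)" "b \<noteq> 0" using nonzero_el[OF n] by blast
  obtain nu where nu: "nu \<in> LL" and ne: "cp nu (m a b) \<noteq> 0" using NZ[OF la a mu b] by blast
  have fus: "nu \<in> fusionL l r (grade_dc {} \<alpha>) (grade_dc d c)" using FA3[OF la mu a(1) b(1) nu] ne by blast
  have fus': "nu \<in> fusionL l r (grade_dc d c) (grade_dc {} \<alpha>)" using fus by (auto simp: fusionL_iff fusion_sym)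
  have e1: "cp nu (m b a) = BL l r (grade_dc d c) (grade_dc {} \<alpha>) nu (grade_dc {} \<alpha>) (grade_dc d c) zeroL *s cp nu (m a b)"
    by (rule comm[OF la mu nu a(1) b(1) fus])
  have e2: "cp nu (m a b) = BL l r (grade_dc {} \<alpha>) (grade_dc d c) nu (grade_dc d c) (grade_dc {} \<alpha>) zeroL *s cp nu (m b a)"
    by (rule comm[OF mu la nu b(1) a(1) fus'])
  let ?P = "BL l r (grade_dc {} \<alpha>) (grade_dc d c) nu (grade_dc d c) (grade_dc {} \<alpha>) zeroL *
            BL l r (grade_dc d c) (grade_dc {} \<alpha>) nu (grade_dc {} \<alpha>) (grade_dc d c) zeroL"
  have h0: "cp nu (m a b) = ?P *s cp nu (m a b)"
    using e2[unfolded e1] by (simp only: vector_smult_assoc)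
  have h: "?P *s cp nu (m a b) = 1 *s cp nu (m a b)"
    using h0[symmetric] by (simp only: vector_smult_lid)
  have "?P = 1 \<or> cp nu (m a b) = 0" using h by (rule vector_mul_rcancel[THEN iffD1])
  then have P1: "?P = 1" using ne by blast
  have fa1: "\<forall>i<l+r. nu i \<in> fusion (grade_dc {} \<alpha> i) (grade_dc d c i)" using fus by (simp add: fusionL_iff)
  have n16: "\<forall>i<l+r. grade_dc {} \<alpha> i \<noteq> I16" by (simp add: grade_dc_def)
  have cond: "(grade_dc {} \<alpha> i = Ihalf \<and> grade_dc d c i = I16) \<longleftrightarrow> i \<in> \<alpha> \<inter> d" for i
    by (auto simp: grade_dc_def)
  have "?P = (\<Prod>i<l. if i \<in> \<alpha> \<inter> d then -1 else 1) * (\<Prod>i\<in>{l..<l+r}. if i \<in> \<alpha> \<inter> d then -1 else 1)"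
    using BL_comm_prod[OF fa1 n16] by (simp only: cond)
  also have "\<dots> = (-1) ^ card ((\<alpha> \<inter> d) \<inter> {..<l}) * (-1) ^ card ((\<alpha> \<inter> d) \<inter> {l..<l+r})"
  proof -
    have "{i \<in> {..<l}. i \<in> \<alpha> \<inter> d} = (\<alpha> \<inter> d) \<inter> {..<l}" by auto
    moreover have "{i \<in> {l..<l+r}. i \<in> \<alpha> \<inter> d} = (\<alpha> \<inter> d) \<inter> {l..<l+r}" by auto
    ultimately show ?thesis by (simp add: prod_sign)
  qed
  also have "\<dots> = (-1) ^ (card ((\<alpha> \<inter> d) \<inter> {..<l}) + card ((\<alpha> \<inter> d) \<inter> {l..<l+r}))"
    by (simp add: power_add)
  finally have "(-1::complex) ^ (card ((\<alpha> \<inter> d) \<inter> {..<l}) + card ((\<alpha> \<inter> d) \<inter> {l..<l+r})) = 1"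
    using P1 by simp
  then have "even (card ((\<alpha> \<inter> d) \<inter> {..<l}) + card ((\<alpha> \<inter> d) \<inter> {l..<l+r}))"
    by (simp add: minus_one_power_iff split: if_splits)
  then show ?thesis unfolding wt_def by simp
qed

end

theorem mainTheorem5:
  fixes Sg :: "(nat \<Rightarrow> IS) \<Rightarrow> (complex ^ 'n) set"
    and m :: "complex ^ 'n \<Rightarrow> complex ^ 'n \<Rightarrow> complex ^ 'n"
    and u :: "complex ^ 'n"
  assumes "simple_framed_algebra l r Sg m u"
  shows "subgroup (C_S l r Sg) (Z2pow (l + r)) \<and> subgroup (D_S l r Sg) (Z2pow (l + r))
    \<and> (\<forall>\<alpha>\<in>C_S l r Sg. even (wt l r \<alpha>)) \<and> (\<forall>d\<in>D_S l r Sg. 8 dvd wt l r d)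
    \<and> (\<forall>\<alpha>\<in>C_S l r Sg. \<forall>d\<in>D_S l r Sg. even (wt l r (\<alpha> \<inter> d)))"
proof -
  interpret SFAL l r Sg m u
    using assms by (auto simp: SFAL_def SFAL_axioms_def FAL_def simple_framed_algebra_def)
  have z: "Sg (grade_dc {} {}) \<noteq> {0}" using u_in u_nz grade_00 by auto
  have "subgroup (C_S l r Sg) (Z2pow (l + r))"
  proof (rule Z2_subgroup)
    show "C_S l r Sg \<subseteq> Pow {..<l + r}" by (auto simp: C_S_def)
    show "{} \<in> C_S l r Sg" using z by (simp add: C_S_def)
  qed (rule C_closed)
  moreover have "subgroup (D_S l r Sg) (Z2pow (l + r))"
  proof (rule Z2_subgroup)
    show "D_S l r Sg \<subseteq> Pow {..<l + r}" by (auto simp: D_S_def)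
    show "{} \<in> D_S l r Sg" using z unfolding D_S_def by blast
  qed (rule D_closed)
  ultimately show ?thesis using C_even D_8 CD_even by blast
qed

end
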